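(* In the setting of the context, suppose Assumption (A1) holds, $\lambda=n^{\lambda_0-\widehat\pi_{uc}/2}$ with fixed $\lambda_0>0$ and $\widehat\pi_{uc}=n^{-1}\sum_{i=1}^n\delta_i$, and $\pi_\alpha\to0$. Then $\lambda=o_P\big(n^{2\lambda_0-\pi_{uc}/2}\big)$.
   Context: For each $n$ we observe $(Y_i,X_i,\delta_i)$, $i=1,\dots,n$, with $X_i\in\mathbb{R}^p$, $T_i=X_i^\top\beta+\alpha_i+\xi_i$, $Y_i=\min(T_i,C_i)$, $\delta_i=\mathbb{1}\{T_i\le C_i\}$; the distribution of $(X_i,\xi_i)$ does not depend on $n$, that of $\alpha_i$ may. $\pi_\alpha=\mathbb{P}(\alpha_i\neq0)$, $\tilde T_i=T_i-\alpha_i$, $\tilde\delta_i=\mathbb{1}\{\tilde T_i\le C_i\}$, $\pi_{uc}=\mathbb{P}(\tilde\delta_1=1)$, $\|\xi\|_\infty=\max_i|\xi_i|$. Assumption (A1): (i) $\{C_i,X_i,\xi_i\}_i$ are independent and, for fixed $n$, identically distributed; (ii) $\mathbb{E}[X_i\xi_i]=0$; (iii) $\mathbb{E}[X_iX_i^\top]$ exists and is positive definite; (iv) for all $t>0$, $\|\xi\|_\infty=o_P(n^t)$. *)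

theory Defs
  imports "HOL-Probability.Probability"
begin

definition conv_prob_zero :: "(nat \<Rightarrow> 'a measure) \<Rightarrow> (nat \<Rightarrow> 'a \<Rightarrow> real) \<Rightarrow> bool" where
  "conv_prob_zero M Z \<longleftrightarrow>
     (\<forall>e>0. (\<lambda>n. measure (M n) {w \<in> space (M n). \<bar>Z n w\<bar> > e}) \<longlonglongrightarrow> 0)"

definition little_oP :: "(nat \<Rightarrow> 'a measure) \<Rightarrow> (nat \<Rightarrow> 'a \<Rightarrow> real) \<Rightarrow> (nat \<Rightarrow> real) \<Rightarrow> bool" where
  "little_oP M Z r \<longleftrightarrow> conv_prob_zero M (\<lambda>n w. Z n w / r n)"

text \<open>Censoring indicator delta_i = 1{T_i <= C_i}, T_i = X_i' beta + alpha_i + xi_i.\<close>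
definition delta_ind :: "real ^ 'p \<Rightarrow> real \<Rightarrow> real \<Rightarrow> real \<Rightarrow> real ^ 'p \<Rightarrow> real" where
  "delta_ind x a e c beta = (if x \<bullet> beta + a + e \<le> c then 1 else 0)"

text \<open>hat pi_uc = n^{-1} sum_{i=1}^n delta_i (observations indexed 0..n-1).\<close>
definition pihat_uc ::
  "(nat \<Rightarrow> nat \<Rightarrow> 'a \<Rightarrow> real ^ 'p) \<Rightarrow> (nat \<Rightarrow> nat \<Rightarrow> 'a \<Rightarrow> real) \<Rightarrow> (nat \<Rightarrow> nat \<Rightarrow> 'a \<Rightarrow> real)
   \<Rightarrow> (nat \<Rightarrow> nat \<Rightarrow> 'a \<Rightarrow> real) \<Rightarrow> real ^ 'p \<Rightarrow> nat \<Rightarrow> 'a \<Rightarrow> real" where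
  "pihat_uc X alpha xi C beta n w =
     (\<Sum>i<n. delta_ind (X n i w) (alpha n i w) (xi n i w) (C n i w) beta) / real n"

text \<open>pi_uc = P(tilde delta_1 = 1), tilde T_1 = X_1' beta + xi_1 (first observation = index 0).\<close>
definition pi_uc ::
  "(nat \<Rightarrow> 'a measure) \<Rightarrow> (nat \<Rightarrow> nat \<Rightarrow> 'a \<Rightarrow> real ^ 'p) \<Rightarrow> (nat \<Rightarrow> nat \<Rightarrow> 'a \<Rightarrow> real)
   \<Rightarrow> (nat \<Rightarrow> nat \<Rightarrow> 'a \<Rightarrow> real) \<Rightarrow> real ^ 'p \<Rightarrow> nat \<Rightarrow> real" where
  "pi_uc M X xi C beta n =
     measure (M n) {w \<in> space (M n). X n 0 w \<bullet> beta + xi n 0 w \<le> C n 0 w}"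

definition pi_alpha :: "(nat \<Rightarrow> 'a measure) \<Rightarrow> (nat \<Rightarrow> nat \<Rightarrow> 'a \<Rightarrow> real) \<Rightarrow> nat \<Rightarrow> real" where
  "pi_alpha M alpha n = measure (M n) {w \<in> space (M n). alpha n 0 w \<noteq> 0}"

end

theory Submission imports Defs begin

lemma (in prob_space) sum_sq_bound:
  fixes Y :: "nat \<Rightarrow> 'a \<Rightarrow> real"
  assumes ind: "indep_vars (\<lambda>_. borel) Y {..<n}"
    and meas: "\<And>i. i < n \<Longrightarrow> Y i \<in> borel_measurable M"
    and bnd: "\<And>i w. i < n \<Longrightarrow> \<bar>Y i w\<bar> \<le> 1"
    and mean: "\<And>i. i < n \<Longrightarrow> expectation (Y i) = 0"
  shows "expectation (\<lambda>w. (\<Sum>i<n. Y i w)^2) \<le> real n"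
proof -
  have intY: "integrable M (Y i)" if "i < n" for i
    by (rule integrable_const_bound[where B=1]) (use that bnd meas in auto)
  have intYY: "integrable M (\<lambda>w. Y i w * Y j w)" if "i < n" "j < n" for i j
  proof (rule integrable_const_bound[where B=1])
    have "\<bar>Y i w\<bar> * \<bar>Y j w\<bar> \<le> 1" for w
      using bnd[OF that(1), of w] bnd[OF that(2), of w] by (intro mult_le_one) auto
    then show "AE x in M. norm (Y i x * Y j x) \<le> 1"
      by (auto simp: abs_mult)
  qed (use that meas in auto)
  have cross: "expectation (\<lambda>w. Y i w * Y j w) = 0" if "i < n" "j < n" "i \<noteq> j" for i j
  proof -
    have ind2: "indep_vars (\<lambda>_. borel) Y {i, j}"
      using indep_vars_subset[OF ind] that by auto
    have "expectation (\<lambda>w. \<Prod>k\<in>{i,j}. Y k w) = (\<Prod>k\<in>{i,j}. expectation (Y k))"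
      by (rule indep_vars_lebesgue_integral[OF _ ind2]) (use that intY in auto)
    then show ?thesis using that mean by simp
  qed
  have diag: "expectation (\<lambda>w. Y i w * Y i w) \<le> 1" if "i < n" for i
  proof -
    have "expectation (\<lambda>w. Y i w * Y i w) \<le> expectation (\<lambda>w. 1)"
    proof (intro integral_mono)
      show "Y i w * Y i w \<le> 1" for w
        using bnd[OF that, of w] by (metis abs_ge_zero abs_mult abs_mult_self_eq mult_le_one)
    qed (use intYY[OF that that] in auto)
    then show ?thesis by (simp add: prob_space)
  qed
  have "expectation (\<lambda>w. (\<Sum>i<n. Y i w)^2) = expectation (\<lambda>w. \<Sum>i<n. \<Sum>j<n. Y i w * Y j w)"
    by (simp add: power2_eq_square sum_product)
  also have "\<dots> = (\<Sum>i<n. \<Sum>j<n. expectation (\<lambda>w. Y i w * Y j w))"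
  proof -
    have "expectation (\<lambda>w. \<Sum>i<n. \<Sum>j<n. Y i w * Y j w) = (\<Sum>i<n. expectation (\<lambda>w. \<Sum>j<n. Y i w * Y j w))"
      by (rule Bochner_Integration.integral_sum) (auto intro!: Bochner_Integration.integrable_sum intYY)
    also have "\<dots> = (\<Sum>i<n. \<Sum>j<n. expectation (\<lambda>w. Y i w * Y j w))"
      by (intro sum.cong refl Bochner_Integration.integral_sum) (auto intro!: intYY)
    finally show ?thesis .
  qed
  also have "\<dots> = (\<Sum>i<n. expectation (\<lambda>w. Y i w * Y i w))"
  proof (rule sum.cong[OF refl])
    fix i assume i: "i \<in> {..<n}"
    have "(\<Sum>j<n. expectation (\<lambda>w. Y i w * Y j w)) = (\<Sum>j\<in>{i}. expectation (\<lambda>w. Y i w * Y j w))"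
      by (rule sum.mono_neutral_right) (use i cross in auto)
    then show "(\<Sum>j<n. expectation (\<lambda>w. Y i w * Y j w)) = expectation (\<lambda>w. Y i w * Y i w)" by simp
  qed
  also have "\<dots> \<le> (\<Sum>i<n. 1)"
    by (rule sum_mono) (use diag in auto)
  finally show ?thesis by simp
qed

theorem lemma8:
  fixes M :: "nat \<Rightarrow> 'a measure"
    and X :: "nat \<Rightarrow> nat \<Rightarrow> 'a \<Rightarrow> real ^ 'p"
    and xi alpha C :: "nat \<Rightarrow> nat \<Rightarrow> 'a \<Rightarrow> real"
    and beta :: "real ^ 'p"
    and Q :: "((real ^ 'p) \<times> real) measure"
    and lambda0 :: real
  assumes prob: "\<And>n. prob_space (M n)"
    and measX: "\<And>n i. X n i \<in> borel_measurable (M n)"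
    and measxi: "\<And>n i. xi n i \<in> borel_measurable (M n)"
    and measalpha: "\<And>n i. alpha n i \<in> borel_measurable (M n)"
    and measC: "\<And>n i. C n i \<in> borel_measurable (M n)"
    and A1_indep: "\<And>n. prob_space.indep_vars (M n) (\<lambda>i. borel)
                     (\<lambda>i w. (C n i w, X n i w, xi n i w)) {..<n}"
    and A1_ident: "\<And>n i. i < n \<Longrightarrow>
          distr (M n) borel (\<lambda>w. (C n i w, X n i w, xi n i w))
        = distr (M n) borel (\<lambda>w. (C n 0 w, X n 0 w, xi n 0 w))"
    and Xxi_law: "\<And>n i. i < n \<Longrightarrow> distr (M n) borel (\<lambda>w. (X n i w, xi n i w)) = Q"
    and alpha_law: "\<And>n i. i < n \<Longrightarrow>
          measure (M n) {w \<in> space (M n). alpha n i w \<noteq> 0}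
        = measure (M n) {w \<in> space (M n). alpha n 0 w \<noteq> 0}"
    and A1_ii: "\<And>n i j. i < n \<Longrightarrow>
          integrable (M n) (\<lambda>w. X n i w $ j * xi n i w)
        \<and> (\<integral>w. X n i w $ j * xi n i w \<partial>M n) = 0"
    and A1_iii_int: "\<And>n i j k. i < n \<Longrightarrow> integrable (M n) (\<lambda>w. X n i w $ j * X n i w $ k)"
    and A1_iii_pd: "\<And>n i v. i < n \<Longrightarrow> v \<noteq> 0 \<Longrightarrow>
          v \<bullet> ((\<chi> j k. \<integral>w. X n i w $ j * X n i w $ k \<partial>M n) *v v) > 0"
    and A1_iv: "\<And>t. t > 0 \<Longrightarrow>
          little_oP M (\<lambda>n w. MAX i\<in>{..<n}. \<bar>xi n i w\<bar>) (\<lambda>n. real n powr t)"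
    and lambda0_pos: "lambda0 > 0"
    and pi_alpha_lim: "pi_alpha M alpha \<longlonglongrightarrow> 0"
  shows "little_oP M
           (\<lambda>n w. real n powr (lambda0 - pihat_uc X alpha xi C beta n w / 2))
           (\<lambda>n. real n powr (2 * lambda0 - pi_uc M X xi C beta n / 2))"
proof -
  define c where "c = lambda0"
  have c: "c > 0" using lambda0_pos c_def by simp
  define g :: "real \<times> (real^'p) \<times> real \<Rightarrow> real" where
    "g z = delta_ind (fst (snd z)) 0 (snd (snd z)) (fst z) beta" for z
  have "g \<in> borel_measurable (borel \<Otimes>\<^sub>M (borel \<Otimes>\<^sub>M borel))" unfolding g_def delta_ind_def by measurable
  then have gmeas[measurable]: "g \<in> borel_measurable borel" by (simp add: borel_prod)
  have g01: "0 \<le> g z \<and> g z \<le> 1" for z unfolding g_def delta_ind_def by auto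
  define p where "p n = pi_uc M X xi C beta n" for n
  have p01: "0 \<le> p n \<and> p n \<le> 1" for n
  proof -
    interpret P: prob_space "M n" by (rule prob)
    show ?thesis unfolding p_def pi_uc_def by auto
  qed
  define D where "D n i w = g (C n i w, X n i w, xi n i w)" for n i w
  define S where "S n w = (\<Sum>i<n. D n i w) / real n" for n w
  define A where "A n w = (\<Sum>i<n. if alpha n i w \<noteq> 0 then 1 else 0::real) / real n" for n w
  have b1: "measure (M n) {w \<in> space (M n). c/2 \<le> \<bar>S n w - p n\<bar>} \<le> 4 / (real n * c^2)"
    if n: "n > 0" for n
  proof -
    interpret P: prob_space "M n" by (rule prob)
    note [measurable] = measX measxi measC
    define Y where "Y i w = D n i w - p n" for i w
    have Ymeas[measurable]: "Y i \<in> borel_measurable (M n)" for i unfolding Y_def D_def by measurable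
    have ind: "P.indep_vars (\<lambda>_. borel) Y {..<n}"
      unfolding Y_def D_def
      using P.indep_vars_compose2[OF A1_indep[of n], of "\<lambda>i z. g z - p n" "\<lambda>_. borel"] by simp
    have bnd: "\<bar>Y i w\<bar> \<le> 1" for i w
      unfolding Y_def D_def using g01[of "(C n i w, X n i w, xi n i w)"] p01[of n] by auto
    have intg: "integrable (M n) (\<lambda>w. g (C n i w, X n i w, xi n i w))" for i
      by (rule P.integrable_const_bound[where B=1]) (use g01 in auto)
    have mean: "P.expectation (Y i) = 0" if i: "i < n" for i
    proof -
      have "P.expectation (\<lambda>w. g (C n i w, X n i w, xi n i w))
          = integral\<^sup>L (distr (M n) borel (\<lambda>w. (C n i w, X n i w, xi n i w))) g"
        by (rule integral_distr[symmetric]) auto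
      also have "\<dots> = integral\<^sup>L (distr (M n) borel (\<lambda>w. (C n 0 w, X n 0 w, xi n 0 w))) g"
        using A1_ident[OF i] by simp
      also have "\<dots> = P.expectation (\<lambda>w. g (C n 0 w, X n 0 w, xi n 0 w))"
        by (rule integral_distr) auto
      also have "\<dots> = P.expectation (indicator {w \<in> space (M n). X n 0 w \<bullet> beta + xi n 0 w \<le> C n 0 w})"
        by (rule Bochner_Integration.integral_cong) (auto simp: g_def delta_ind_def indicator_def)
      also have "\<dots> = p n" unfolding p_def pi_uc_def by simp
      finally show ?thesis unfolding Y_def D_def
        using intg by (simp add: Bochner_Integration.integral_diff P.prob_space)
    qed
    have E: "P.expectation (\<lambda>w. (\<Sum>i<n. Y i w)^2) \<le> real n"
      by (rule P.sum_sq_bound[OF ind]) (use bnd mean in auto)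
    have intsq: "integrable (M n) (\<lambda>w. ((\<Sum>i<n. Y i w) / real n)^2)"
    proof (rule P.integrable_const_bound[where B=1])
      have "\<bar>\<Sum>i<n. Y i w\<bar> \<le> real n" for w
        using sum_abs[of "\<lambda>i. Y i w" "{..<n}"] sum_mono[of "{..<n}" "\<lambda>i. \<bar>Y i w\<bar>" "\<lambda>_. 1"] bnd
        by (metis (no_types, lifting) card_lessThan order.trans real_of_card sum.cong)
      then have "\<bar>(\<Sum>i<n. Y i w) / real n\<bar> \<le> 1" for w using n by (simp add: divide_le_eq_1 abs_divide)
      then show "AE x in M n. norm (((\<Sum>i<n. Y i x) / real n)^2) \<le> 1"
        by (simp add: abs_square_le_1)
    qed auto
    have m: "measure (M n) {w \<in> space (M n). c/2 \<le> \<bar>(\<Sum>i<n. Y i w) / real n\<bar>}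
        \<le> P.expectation (\<lambda>w. ((\<Sum>i<n. Y i w) / real n)^2) / (c/2)^2"
      by (rule P.second_moment_method) (use intsq c in auto)
    have "P.expectation (\<lambda>w. ((\<Sum>i<n. Y i w) / real n)^2) = P.expectation (\<lambda>w. (\<Sum>i<n. Y i w)^2) / (real n)^2"
      by (simp add: power_divide)
    also have "\<dots> \<le> real n / (real n)^2"
      using E by (intro divide_right_mono) auto
    finally have "P.expectation (\<lambda>w. ((\<Sum>i<n. Y i w) / real n)^2) / (c/2)^2 \<le> real n / (real n)^2 / (c/2)^2"
      by (intro divide_right_mono) auto
    also have "real n / (real n)^2 / (c/2)^2 = 4 / (real n * c^2)"
      using n by (simp add: power2_eq_square field_simps)
    finally have m2: "measure (M n) {w \<in> space (M n). c/2 \<le> \<bar>(\<Sum>i<n. Y i w) / real n\<bar>} \<le> 4 / (real n * c^2)"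
      using m by linarith
    have eq: "(\<Sum>i<n. Y i w) / real n = S n w - p n" for w
      using n by (auto simp: Y_def S_def sum_subtractf field_simps)
    show ?thesis using m2 by (simp only: eq)
  qed
  have b2: "measure (M n) {w \<in> space (M n). c/2 \<le> A n w} \<le> 2 * pi_alpha M alpha n / c"
    if n: "n > 0" for n
  proof -
    interpret P: prob_space "M n" by (rule prob)
    note [measurable] = measalpha
    have inti: "integrable (M n) (\<lambda>w. if alpha n i w \<noteq> 0 then 1 else 0::real)" for i
      by (rule P.integrable_const_bound[where B=1]) auto
    have intA: "integrable (M n) (A n)"
      unfolding A_def using inti by auto
    have Ei: "P.expectation (\<lambda>w. if alpha n i w \<noteq> 0 then 1 else 0::real) = pi_alpha M alpha n"
      if i: "i < n" for i
    proof -
      have "P.expectation (\<lambda>w. if alpha n i w \<noteq> 0 then 1 else 0::real)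
          = P.expectation (indicator {w \<in> space (M n). alpha n i w \<noteq> 0})"
        by (rule Bochner_Integration.integral_cong) (auto simp: indicator_def)
      also have "\<dots> = measure (M n) {w \<in> space (M n). alpha n i w \<noteq> 0}" by simp
      also have "\<dots> = pi_alpha M alpha n" unfolding pi_alpha_def by (rule alpha_law[OF i])
      finally show ?thesis .
    qed
    have EA: "P.expectation (A n) = pi_alpha M alpha n"
    proof -
      have "P.expectation (A n) = (\<Sum>i<n. P.expectation (\<lambda>w. if alpha n i w \<noteq> 0 then 1 else 0::real)) / real n"
        unfolding A_def using inti by (simp add: Bochner_Integration.integral_sum)
      also have "\<dots> = (\<Sum>i<n. pi_alpha M alpha n) / real n" using Ei by simp
      finally show ?thesis using n by simp
    qed
    have Anonneg: "0 \<le> A n w" for w unfolding A_def by (auto intro!: sum_nonneg divide_nonneg_nonneg)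
    have "measure (M n) {w \<in> space (M n). c/2 \<le> A n w} \<le> P.expectation (A n) / (c/2)"
      by (rule integral_Markov_inequality_measure[where A="space (M n)"])
         (use intA c Anonneg in auto)
    then show ?thesis using EA by (simp add: mult.commute)
  qed
  define R where "R n w = real n powr (lambda0 - pihat_uc X alpha xi C beta n w / 2)
       / real n powr (2 * lambda0 - pi_uc M X xi C beta n / 2)" for n w
  have incl: "{w \<in> space (M n). e < \<bar>R n w\<bar>} \<subseteq>
      {w \<in> space (M n). c/2 \<le> \<bar>S n w - p n\<bar>} \<union> {w \<in> space (M n). c/2 \<le> A n w}"
    if n: "n > 0" and ne: "real n powr (-c/2) \<le> e" for n e
  proof (rule subsetI)
    fix w assume w: "w \<in> {w \<in> space (M n). e < \<bar>R n w\<bar>}"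
    show "w \<in> {w \<in> space (M n). c/2 \<le> \<bar>S n w - p n\<bar>} \<union> {w \<in> space (M n). c/2 \<le> A n w}"
    proof (rule ccontr)
      assume "\<not> ?thesis"
      then have h1: "\<bar>S n w - p n\<bar> < c/2" and h2: "A n w < c/2" using w by auto
      have pt: "delta_ind (X n i w) (alpha n i w) (xi n i w) (C n i w) beta
          \<ge> D n i w - (if alpha n i w \<noteq> 0 then 1 else 0)" for i
        by (auto simp: D_def g_def delta_ind_def)
      have "(\<Sum>i<n. D n i w) - (\<Sum>i<n. if alpha n i w \<noteq> 0 then 1 else 0::real)
          \<le> (\<Sum>i<n. delta_ind (X n i w) (alpha n i w) (xi n i w) (C n i w) beta)"
        unfolding sum_subtractf[symmetric] by (rule sum_mono) (use pt in auto)
      then have "S n w - A n w \<le> pihat_uc X alpha xi C beta n w"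
        unfolding S_def A_def pihat_uc_def using n by (simp add: diff_divide_distrib[symmetric] divide_right_mono)
      then have ex: "(lambda0 - pihat_uc X alpha xi C beta n w / 2) - (2 * lambda0 - pi_uc M X xi C beta n / 2) \<le> -c/2"
        using h1 h2 unfolding c_def p_def by linarith
      have "R n w = real n powr ((lambda0 - pihat_uc X alpha xi C beta n w / 2) - (2 * lambda0 - pi_uc M X xi C beta n / 2))"
        unfolding R_def by (simp only: powr_diff)
      also have "\<dots> \<le> real n powr (-c/2)"
        using n ex by (intro powr_mono) auto
      finally have "R n w \<le> e" using ne by linarith
      moreover have "R n w > 0" unfolding R_def using n by simp
      ultimately show False using w by auto
    qed
  qed
  show ?thesis
    unfolding little_oP_def conv_prob_zero_def
  proof (intro allI impI)
    fix e :: real assume e: "e > 0"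
    have ev1: "eventually (\<lambda>n. real n powr (-c/2) < e) sequentially"
      using tendsto_neg_powr[of "-c/2" real sequentially] c filterlim_real_sequentially e
      by (auto dest: order_tendstoD(2))
    have ev: "eventually (\<lambda>n. measure (M n) {w \<in> space (M n). e < \<bar>R n w\<bar>}
        \<le> 4 / (real n * c^2) + 2 * pi_alpha M alpha n / c) sequentially"
      using ev1 eventually_gt_at_top[of 0]
    proof eventually_elim
      case (elim n)
      interpret P: prob_space "M n" by (rule prob)
      note [measurable] = measX measxi measC measalpha
      have [measurable]: "S n \<in> borel_measurable (M n)" "A n \<in> borel_measurable (M n)"
        unfolding S_def A_def D_def by measurable
      have "measure (M n) {w \<in> space (M n). e < \<bar>R n w\<bar>}
          \<le> measure (M n) ({w \<in> space (M n). c/2 \<le> \<bar>S n w - p n\<bar>} \<union> {w \<in> space (M n). c/2 \<le> A n w})"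
        by (rule P.finite_measure_mono[OF incl]) (use elim in auto)
      also have "\<dots> \<le> measure (M n) {w \<in> space (M n). c/2 \<le> \<bar>S n w - p n\<bar>} + measure (M n) {w \<in> space (M n). c/2 \<le> A n w}"
        by (rule measure_Un_le) auto
      also have "\<dots> \<le> 4 / (real n * c^2) + 2 * pi_alpha M alpha n / c"
        using b1[of n] b2[of n] elim by linarith
      finally show ?case .
    qed
    have lim1: "(\<lambda>n. 4 / (real n * c^2)) \<longlonglongrightarrow> 0"
    proof -
      have "(\<lambda>n. (4 / c^2) * inverse (real n)) \<longlonglongrightarrow> 0"
        by (intro tendsto_mult_right_zero lim_inverse_n)
      then show ?thesis by (simp add: field_simps)
    qed
    have lim2: "(\<lambda>n. 2 * pi_alpha M alpha n / c) \<longlonglongrightarrow> 0"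
      using tendsto_mult[OF tendsto_const pi_alpha_lim, of "2/c"] by simp
    have "(\<lambda>n. measure (M n) {w \<in> space (M n). e < \<bar>R n w\<bar>}) \<longlonglongrightarrow> 0"
      by (rule tendsto_sandwich[OF _ ev tendsto_const tendsto_add_zero[OF lim1 lim2]]) auto
    then show "(\<lambda>n. measure (M n) {w \<in> space (M n). e < \<bar>real n powr (lambda0 - pihat_uc X alpha xi C beta n w / 2) /
               real n powr (2 * lambda0 - pi_uc M X xi C beta n / 2)\<bar>}) \<longlonglongrightarrow> 0"
      unfolding R_def .
  qed
qed

end
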